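(* For any $\sigma,\tau\in\mathbb{T}$ such that $[\![\sigma]\!]$ and $[\![\tau]\!]$ are defined, $\sigma=\tau$ (in $\mathbb{T}$) if and only if $[\![\sigma]\!]=[\![\tau]\!]$ (in $\mathbb{T}_C$).
   Context: \textbf{Source types.} $\mathbb{T}\ni\sigma ::= a\mid\omega\mid\sigma_1\to\sigma_2\mid\sigma_1\cap\sigma_2\mid\rho$, $\mathbb{T}_R\ni\rho ::= \langle\rangle\mid\langle l:\sigma\rangle\mid\rho_1+\rho_2\mid\rho_1\cap\rho_2$. Subtyping $\le$ on $\mathbb{T}$: least preorder with $\sigma\le\omega$; $\omega\le\omega\to\omega$; $\sigma\cap\tau\le\sigma,\tau$; $\sigma\le\tau_1,\sigma\le\tau_2\Rightarrow\sigma\le\tau_1\cap\tau_2$; $(\sigma\to\tau_1)\cap(\sigma\to\tau_2)\le\sigma\to\tau_1\cap\tau_2$; $\sigma_2\le\sigma_1,\tau_1\le\tau_2\Rightarrow\sigma_1\to\tau_1\le\sigma_2\to\tau_2$; $\langle l:\sigma\rangle\le\langle\rangle$; $\langle l:\sigma\rangle\cap\langle l:\tau\rangle\le\langle l:\sigma\cap\tau\rangle$; $\sigma\le\tau\Rightarrow\langle l:\sigma\rangle\le\langle l:\tau\rangle$; $\rho+\langle\rangle=\langle\rangle+\rho=\rho$; $(\rho_1+\rho_2)+\rho_3=\rho_1+(\rho_2+\rho_3)$; $(\rho_1\cap\rho_2)+\rho_3=(\rho_1+\rho_3)\cap(\rho_2+\rho_3)$; $\langle l:\sigma\rangle+(\langle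 l:\tau\rangle\cap\rho)=\langle l:\tau\rangle\cap\rho$; $\langle l:\sigma\rangle+(\langle l':\tau\rangle\cap\rho)=\langle l':\tau\rangle\cap(\langle l:\sigma\rangle+\rho)$ if $l\neq l'$; $\rho_1\le\rho_2\Rightarrow\rho_1+\rho\le\rho_2+\rho$; $\rho_1=\rho_2\Rightarrow\rho+\rho_1=\rho+\rho_2$. $\sigma=\tau$ means $\sigma\le\tau$ and $\tau\le\sigma$. \textbf{Target types.} $\mathbb{T}_C\ni\tau ::= a\mid\alpha\mid\omega\mid\tau_1\to\tau_2\mid\tau_1\cap\tau_2\mid c(\tau)$ ($c$ unary constructors) with subtyping given by the arrow/intersection axioms above plus $\tau_1\le\tau_2\Rightarrow c(\tau_1)\le c(\tau_2)$ and $c(\tau_1)\cap c(\tau_2)\le c(\tau_1\cap\tau_2)$; $=$ is equivalence. \textbf{Translation.} $\mathcal{L}$ is a fixed finite set of labels; constructors $\langle\!\langle\cdot\rangle\!\rangle$ and $l(\cdot)$ for $l\in\mathcal{L}$. Partial map $[\![\omega]\!]=\omega$, $[\![a]\!]=a$, $[\![\sigma\to\tau]\!]=[\![\sigma]\!]\to[\![\tau]\!]$, $[\![\sigma\cap\tau]\!]=[\![\sigma]\!]\cap[\![\tau]\!]$, $[\![\langle l:\tau\rangle]\!]=\langle\!\langle l([\![\tau]\!])\rangle\!\rangle$ for $l\in\mathcal{L}$, $[\![\langle\rangle]\!]=\langle\!\langle\omega\rangle\!\rangle$; it is undefined on types containing $+$. *)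

theory Defs
  imports Main
begin

datatype ('a, 'l) sty =
    SAtom 'a
  | SOmega
  | SArr "('a, 'l) sty" "('a, 'l) sty"
  | SInter "('a, 'l) sty" "('a, 'l) sty"
  | SEmpty
  | SField 'l "('a, 'l) sty"
  | SPlus "('a, 'l) sty" "('a, 'l) sty"

text \<open>swf: membership in T; isrec: membership in T_R.\<close>
fun swf :: "('a, 'l) sty \<Rightarrow> bool" and isrec :: "('a, 'l) sty \<Rightarrow> bool" where
  "swf (SAtom a) = True"
| "swf SOmega = True"
| "swf (SArr s t) = (swf s \<and> swf t)"
| "swf (SInter s t) = (swf s \<and> swf t)"
| "swf SEmpty = True"
| "swf (SField l s) = swf s"
| "swf (SPlus r1 r2) = (isrec r1 \<and> isrec r2)"
| "isrec SEmpty = True"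
| "isrec (SField l s) = swf s"
| "isrec (SPlus r1 r2) = (isrec r1 \<and> isrec r2)"
| "isrec (SInter r1 r2) = (isrec r1 \<and> isrec r2)"
| "isrec (SAtom a) = False"
| "isrec SOmega = False"
| "isrec (SArr s t) = False"

inductive ssub :: "('a, 'l) sty \<Rightarrow> ('a, 'l) sty \<Rightarrow> bool" where
  s_refl: "swf s \<Longrightarrow> ssub s s"
| s_trans: "ssub s t \<Longrightarrow> ssub t u \<Longrightarrow> ssub s u"
| s_omega: "swf s \<Longrightarrow> ssub s SOmega"
| s_omega_arr: "ssub SOmega (SArr SOmega SOmega)"
| s_inter1: "swf s \<Longrightarrow> swf t \<Longrightarrow> ssub (SInter s t) s"
| s_inter2: "swf s \<Longrightarrow> swf t \<Longrightarrow> ssub (SInter s t) t"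
| s_glb: "ssub s t1 \<Longrightarrow> ssub s t2 \<Longrightarrow> ssub s (SInter t1 t2)"
| s_arr_dist: "swf s \<Longrightarrow> swf t1 \<Longrightarrow> swf t2 \<Longrightarrow>
    ssub (SInter (SArr s t1) (SArr s t2)) (SArr s (SInter t1 t2))"
| s_arr: "ssub s2 s1 \<Longrightarrow> ssub t1 t2 \<Longrightarrow> ssub (SArr s1 t1) (SArr s2 t2)"
| s_field_empty: "swf s \<Longrightarrow> ssub (SField l s) SEmpty"
| s_field_inter: "swf s \<Longrightarrow> swf t \<Longrightarrow>
    ssub (SInter (SField l s) (SField l t)) (SField l (SInter s t))"
| s_field: "ssub s t \<Longrightarrow> ssub (SField l s) (SField l t)"
| s_plus_empty_r1: "isrec r \<Longrightarrow> ssub (SPlus r SEmpty) r"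
| s_plus_empty_r2: "isrec r \<Longrightarrow> ssub r (SPlus r SEmpty)"
| s_plus_empty_l1: "isrec r \<Longrightarrow> ssub (SPlus SEmpty r) r"
| s_plus_empty_l2: "isrec r \<Longrightarrow> ssub r (SPlus SEmpty r)"
| s_plus_assoc1: "isrec r1 \<Longrightarrow> isrec r2 \<Longrightarrow> isrec r3 \<Longrightarrow>
    ssub (SPlus (SPlus r1 r2) r3) (SPlus r1 (SPlus r2 r3))"
| s_plus_assoc2: "isrec r1 \<Longrightarrow> isrec r2 \<Longrightarrow> isrec r3 \<Longrightarrow>
    ssub (SPlus r1 (SPlus r2 r3)) (SPlus (SPlus r1 r2) r3)"
| s_plus_dist1: "isrec r1 \<Longrightarrow> isrec r2 \<Longrightarrow> isrec r3 \<Longrightarrow>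
    ssub (SPlus (SInter r1 r2) r3) (SInter (SPlus r1 r3) (SPlus r2 r3))"
| s_plus_dist2: "isrec r1 \<Longrightarrow> isrec r2 \<Longrightarrow> isrec r3 \<Longrightarrow>
    ssub (SInter (SPlus r1 r3) (SPlus r2 r3)) (SPlus (SInter r1 r2) r3)"
| s_plus_same1: "swf s \<Longrightarrow> swf t \<Longrightarrow> isrec r \<Longrightarrow>
    ssub (SPlus (SField l s) (SInter (SField l t) r)) (SInter (SField l t) r)"
| s_plus_same2: "swf s \<Longrightarrow> swf t \<Longrightarrow> isrec r \<Longrightarrow>
    ssub (SInter (SField l t) r) (SPlus (SField l s) (SInter (SField l t) r))"
| s_plus_diff1: "l \<noteq> l' \<Longrightarrow> swf s \<Longrightarrow> swf t \<Longrightarrow> isrec r \<Longrightarrow>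
    ssub (SPlus (SField l s) (SInter (SField l' t) r)) (SInter (SField l' t) (SPlus (SField l s) r))"
| s_plus_diff2: "l \<noteq> l' \<Longrightarrow> swf s \<Longrightarrow> swf t \<Longrightarrow> isrec r \<Longrightarrow>
    ssub (SInter (SField l' t) (SPlus (SField l s) r)) (SPlus (SField l s) (SInter (SField l' t) r))"
| s_plus_mono_l: "ssub r1 r2 \<Longrightarrow> isrec r1 \<Longrightarrow> isrec r2 \<Longrightarrow> isrec r \<Longrightarrow>
    ssub (SPlus r1 r) (SPlus r2 r)"
| s_plus_cong_r: "ssub r1 r2 \<Longrightarrow> ssub r2 r1 \<Longrightarrow> isrec r1 \<Longrightarrow> isrec r2 \<Longrightarrow> isrec r \<Longrightarrow>
    ssub (SPlus r r1) (SPlus r r2)"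

definition seq :: "('a, 'l) sty \<Rightarrow> ('a, 'l) sty \<Rightarrow> bool" where
  "seq s t \<longleftrightarrow> ssub s t \<and> ssub t s"

datatype ('a, 'v, 'c) tty =
    TAtom 'a
  | TVar 'v
  | TOmega
  | TArr "('a, 'v, 'c) tty" "('a, 'v, 'c) tty"
  | TInter "('a, 'v, 'c) tty" "('a, 'v, 'c) tty"
  | TCon 'c "('a, 'v, 'c) tty"

inductive tsub :: "('a, 'v, 'c) tty \<Rightarrow> ('a, 'v, 'c) tty \<Rightarrow> bool" where
  t_refl: "tsub s s"
| t_trans: "tsub s t \<Longrightarrow> tsub t u \<Longrightarrow> tsub s u"
| t_omega: "tsub s TOmega"
| t_omega_arr: "tsub TOmega (TArr TOmega TOmega)"
| t_inter1: "tsub (TInter s t) s"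
| t_inter2: "tsub (TInter s t) t"
| t_glb: "tsub s t1 \<Longrightarrow> tsub s t2 \<Longrightarrow> tsub s (TInter t1 t2)"
| t_arr_dist: "tsub (TInter (TArr s t1) (TArr s t2)) (TArr s (TInter t1 t2))"
| t_arr: "tsub s2 s1 \<Longrightarrow> tsub t1 t2 \<Longrightarrow> tsub (TArr s1 t1) (TArr s2 t2)"
| t_con: "tsub t1 t2 \<Longrightarrow> tsub (TCon c t1) (TCon c t2)"
| t_con_dist: "tsub (TInter (TCon c t1) (TCon c t2)) (TCon c (TInter t1 t2))"

definition teq :: "('a, 'v, 'c) tty \<Rightarrow> ('a, 'v, 'c) tty \<Rightarrow> bool" where
  "teq s t \<longleftrightarrow> tsub s t \<and> tsub t s"

text \<open>Constructors: the record constructor \<langle>\<langle>.\<rangle>\<rangle> and one constructor per label.\<close>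
datatype 'l ctor = RecC | LabC 'l

fun transl :: "'l set \<Rightarrow> ('a, 'l) sty \<Rightarrow> ('a, 'v, 'l ctor) tty option" where
  "transl L SOmega = Some TOmega"
| "transl L (SAtom a) = Some (TAtom a)"
| "transl L (SArr s t) =
     (case (transl L s, transl L t) of (Some s', Some t') \<Rightarrow> Some (TArr s' t') | _ \<Rightarrow> None)"
| "transl L (SInter s t) =
     (case (transl L s, transl L t) of (Some s', Some t') \<Rightarrow> Some (TInter s' t') | _ \<Rightarrow> None)"
| "transl L (SField l s) =
     (if l \<in> L then map_option (\<lambda>t. TCon RecC (TCon (LabC l) t)) (transl L s) else None)"
| "transl L SEmpty = Some (TCon RecC TOmega)"
| "transl L (SPlus r1 r2) = None"

end

theory Submission
  imports Defs
begin

fun enc :: "('l \<times> ('a, 'v, 'l ctor) tty) list \<Rightarrow> ('a, 'v, 'l ctor) tty" where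
  "enc [] = TCon RecC TOmega"
| "enc (p # xs) = TInter (TCon RecC (TCon (LabC (fst p)) (snd p))) (enc xs)"

definition pls :: "('l \<times> 'b) list \<Rightarrow> ('l \<times> 'b) list \<Rightarrow> ('l \<times> 'b) list" where
  "pls xs ys = filter (\<lambda>p. fst p \<notin> fst ` set ys) xs @ ys"

fun tr :: "('a, 'l) sty \<Rightarrow> ('a, 'v, 'l ctor) tty"
and flds :: "('a, 'l) sty \<Rightarrow> ('l \<times> ('a, 'v, 'l ctor) tty) list" where
  "tr (SAtom a) = TAtom a"
| "tr SOmega = TOmega"
| "tr (SArr s t) = TArr (tr s) (tr t)"
| "tr (SInter s t) = TInter (tr s) (tr t)"
| "tr SEmpty = TCon RecC TOmega"
| "tr (SField l s) = TCon RecC (TCon (LabC l) (tr s))"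
| "tr (SPlus r1 r2) = enc (pls (flds r1) (flds r2))"
| "flds SEmpty = []"
| "flds (SField l s) = [(l, tr s)]"
| "flds (SInter a b) = flds a @ flds b"
| "flds (SPlus a b) = pls (flds a) (flds b)"
| "flds (SAtom a) = []"
| "flds SOmega = []"
| "flds (SArr a b) = []"

definition lab :: "('l \<times> 'b) list \<Rightarrow> 'l \<Rightarrow> 'b list" where
  "lab xs l = map snd (filter (\<lambda>p. fst p = l) xs)"

definition cap :: "('a, 'v, 'c) tty list \<Rightarrow> ('a, 'v, 'c) tty" where
  "cap ts = foldr TInter ts TOmega"

definition fw :: "('l \<times> ('a, 'v, 'c) tty) list \<Rightarrow> ('l \<times> ('a, 'v, 'c) tty) list \<Rightarrow> bool" where
  "fw xs ys = (\<forall>p\<in>set ys. lab xs (fst p) \<noteq> [] \<and> tsub (cap (lab xs (fst p))) (snd p))"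

lemmas tI = t_refl t_omega t_omega_arr t_inter1 t_inter2 t_glb t_arr_dist t_arr t_con t_con_dist

lemma cap_mem: "t \<in> set ts \<Longrightarrow> tsub (cap ts) t"
  by (induction ts) (auto simp: cap_def intro: tI dest: t_trans[OF t_inter2])

lemma cap_glb: "(\<forall>t\<in>set ts. tsub a t) \<Longrightarrow> tsub a (cap ts)"
  by (induction ts) (auto simp: cap_def intro: tI)

lemma enc_mem: "p \<in> set xs \<Longrightarrow> tsub (enc xs) (TCon RecC (TCon (LabC (fst p)) (snd p)))"
  by (induction xs) (auto intro: tI dest: t_trans[OF t_inter2])

lemma enc_top: "tsub (enc xs) (TCon RecC TOmega)"
  by (induction xs) (auto intro: tI dest: t_trans[OF t_inter2])

lemma enc_glb: "(\<forall>p\<in>set ys. tsub a (TCon RecC (TCon (LabC (fst p)) (snd p)))) \<Longrightarrow>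
   tsub a (TCon RecC TOmega) \<Longrightarrow> tsub a (enc ys)"
  by (induction ys) (auto intro: tI)

lemma enc_sub: "set ys \<subseteq> set xs \<Longrightarrow> tsub (enc xs) (enc ys)"
  by (rule enc_glb) (auto intro: enc_mem enc_top)

lemma rc_lc_dist: "tsub (TInter (TCon RecC (TCon (LabC l) a)) (TCon RecC (TCon (LabC l) b)))
   (TCon RecC (TCon (LabC l) (TInter a b)))"
  by (meson t_con t_con_dist t_trans)

lemma enc_lab: "lab xs l \<noteq> [] \<Longrightarrow> tsub (enc xs) (TCon RecC (TCon (LabC l) (cap (lab xs l))))"
proof (induction xs)
  case Nil
  then show ?case by (simp add: lab_def)
next
  case (Cons p xs)
  obtain l' t' where p: "p = (l', t')" by (cases p)
  show ?case
  proof (cases "l' = l")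
    case True
    then have lb: "lab (p # xs) l = t' # lab xs l" using p by (simp add: lab_def)
    show ?thesis
    proof (cases "lab xs l = []")
      case True
      have "tsub t' (TInter t' TOmega)" by (auto intro: tI)
      then have "tsub (TCon RecC (TCon (LabC l) t')) (TCon RecC (TCon (LabC l) (cap (lab (p # xs) l))))"
        using lb True by (simp add: cap_def t_con)
      then show ?thesis using p \<open>l' = l\<close> by (auto intro: t_trans[OF t_inter1])
    next
      case False
      have "tsub (enc (p # xs)) (TInter (TCon RecC (TCon (LabC l) t')) (TCon RecC (TCon (LabC l) (cap (lab xs l)))))"
        using Cons.IH[OF False] p \<open>l' = l\<close> by (simp add: t_glb t_inter1 t_trans[OF t_inter2])
      moreover have "tsub (TInter (TCon RecC (TCon (LabC l) t')) (TCon RecC (TCon (LabC l) (cap (lab xs l)))))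
         (TCon RecC (TCon (LabC l) (TInter t' (cap (lab xs l)))))" by (rule rc_lc_dist)
      moreover have "cap (lab (p # xs) l) = TInter t' (cap (lab xs l))" using lb by (simp add: cap_def)
      ultimately show ?thesis by (metis t_trans)
    qed
  next
    case False
    then have "lab (p # xs) l = lab xs l" using p by (simp add: lab_def)
    then show ?thesis using Cons p by (auto intro: t_trans[OF t_inter2])
  qed
qed

lemma fw_enc: "fw xs ys \<Longrightarrow> tsub (enc xs) (enc ys)"
proof (rule enc_glb)
  assume h: "fw xs ys"
  show "\<forall>p\<in>set ys. tsub (enc xs) (TCon RecC (TCon (LabC (fst p)) (snd p)))"
  proof
    fix p assume "p \<in> set ys"
    then have a: "lab xs (fst p) \<noteq> []" and b: "tsub (cap (lab xs (fst p))) (snd p)"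
      using h by (auto simp: fw_def)
    show "tsub (enc xs) (TCon RecC (TCon (LabC (fst p)) (snd p)))"
      using enc_lab[OF a] b by (meson t_con t_trans)
  qed
qed (rule enc_top)

lemma lab_mem: "(l, t) \<in> set xs \<Longrightarrow> t \<in> set (lab xs l)"
  by (force simp: lab_def)

lemma fw_subset: "set ys \<subseteq> set xs \<Longrightarrow> fw xs ys"
  unfolding fw_def
  by (auto intro!: cap_mem lab_mem) (metis lab_mem empty_iff list.set(1) subsetD)

lemma lab_ne: "(lab xs l \<noteq> []) = (l \<in> fst ` set xs)"
  by (force simp: lab_def filter_empty_conv)

lemma lab_pls: "lab (pls xs zs) l = (if l \<in> fst ` set zs then lab zs l else lab xs l)"
proof -
  have a: "filter (\<lambda>p. fst p = l) (filter (\<lambda>p. fst p \<notin> fst ` set zs) xs) =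
     (if l \<in> fst ` set zs then [] else filter (\<lambda>p. fst p = l) xs)"
    by (induction xs) auto
  have b: "l \<notin> fst ` set zs \<Longrightarrow> filter (\<lambda>p. fst p = l) zs = []"
    by (auto simp: filter_empty_conv)
  show ?thesis unfolding lab_def pls_def using a b by simp
qed

lemma fw_trans: "fw xs ys \<Longrightarrow> fw ys zs \<Longrightarrow> fw xs zs"
  unfolding fw_def
proof (intro ballI conjI)
  fix p assume a: "\<forall>p\<in>set ys. lab xs (fst p) \<noteq> [] \<and> tsub (cap (lab xs (fst p))) (snd p)"
    and b: "\<forall>p\<in>set zs. lab ys (fst p) \<noteq> [] \<and> tsub (cap (lab ys (fst p))) (snd p)"
    and p: "p \<in> set zs"
  obtain t where t: "t \<in> set (lab ys (fst p))" using b p by (metis list.set_intros(1) neq_Nil_conv)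
  then have "(fst p, t) \<in> set ys" by (auto simp: lab_def)
  then show "lab xs (fst p) \<noteq> []" using a by auto
  have "\<forall>t\<in>set (lab ys (fst p)). tsub (cap (lab xs (fst p))) t"
    using a by (auto simp: lab_def)
  then have "tsub (cap (lab xs (fst p))) (cap (lab ys (fst p)))" by (rule cap_glb)
  then show "tsub (cap (lab xs (fst p))) (snd p)" using b p t_trans by blast
qed

lemma fw_dom: "fw xs ys \<Longrightarrow> fst ` set ys \<subseteq> fst ` set xs"
  unfolding fw_def using lab_ne by fastforce

lemma fw_app: "fw xs ys \<Longrightarrow> fw xs zs \<Longrightarrow> fw xs (ys @ zs)"
  unfolding fw_def by auto

lemma fw_pls_mono: "fw xs ys \<Longrightarrow> fw (pls xs zs) (pls ys zs)"
  unfolding fw_def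
proof (intro ballI)
  fix p assume a: "\<forall>p\<in>set ys. lab xs (fst p) \<noteq> [] \<and> tsub (cap (lab xs (fst p))) (snd p)"
    and p: "p \<in> set (pls ys zs)"
  show "lab (pls xs zs) (fst p) \<noteq> [] \<and> tsub (cap (lab (pls xs zs) (fst p))) (snd p)"
  proof (cases "fst p \<in> fst ` set zs")
    case True
    then have "p \<in> set zs" using p by (auto simp: pls_def)
    then show ?thesis using True by (simp add: lab_pls) (metis cap_mem empty_iff lab_mem list.set(1) prod.collapse)
  next
    case False
    then have "p \<in> set ys" using p by (auto simp: pls_def)
    then show ?thesis using False a by (simp add: lab_pls)
  qed
qed

lemma fw_pls_cong: "fw xs ys \<Longrightarrow> fw ys xs \<Longrightarrow> fw (pls zs xs) (pls zs ys)"
proof -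
  assume h1: "fw xs ys" and h2: "fw ys xs"
  have d: "fst ` set xs = fst ` set ys" using fw_dom[OF h1] fw_dom[OF h2] by blast
  show ?thesis unfolding fw_def
  proof (intro ballI)
    fix p assume p: "p \<in> set (pls zs ys)"
    show "lab (pls zs xs) (fst p) \<noteq> [] \<and> tsub (cap (lab (pls zs xs) (fst p))) (snd p)"
    proof (cases "fst p \<in> fst ` set ys")
      case True
      then have "p \<in> set ys" using p by (auto simp: pls_def)
      then show ?thesis using True d h1 by (simp add: lab_pls fw_def)
    next
      case False
      then have "p \<in> set zs" using p by (auto simp: pls_def)
      then show ?thesis using False d
        by (simp add: lab_pls) (metis cap_mem empty_iff lab_mem list.set(1) prod.collapse)
    qed
  qed
qed

lemma isrec_swf: "isrec r \<Longrightarrow> swf r"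
  by (induction r) auto

lemma tr_enc: "isrec r \<Longrightarrow> tsub (tr r :: ('a, 'v, 'l ctor) tty) (enc (flds r)) \<and> tsub (enc (flds r)) (tr r :: ('a, 'v, 'l ctor) tty)"
proof (induction r)
  case (SField l s)
  then show ?case by (auto intro: tI)
next
  case (SInter r1 r2)
  then have i1: "tsub (tr r1 :: ('a, 'v, 'l ctor) tty) (enc (flds r1))" "tsub (enc (flds r1)) (tr r1 :: ('a, 'v, 'l ctor) tty)"
    and i2: "tsub (tr r2 :: ('a, 'v, 'l ctor) tty) (enc (flds r2))" "tsub (enc (flds r2)) (tr r2 :: ('a, 'v, 'l ctor) tty)" by auto
  have a: "tsub (enc (flds r1 @ flds r2)) (enc (flds r1) :: ('a, 'v, 'l ctor) tty)" "tsub (enc (flds r1 @ flds r2)) (enc (flds r2) :: ('a, 'v, 'l ctor) tty)"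
    by (auto intro: enc_sub)
  have b: "tsub (TInter (tr r1) (tr r2) :: ('a, 'v, 'l ctor) tty) (enc (flds r1 @ flds r2))"
  proof (rule enc_glb)
    show "\<forall>p\<in>set (flds r1 @ flds r2). tsub (TInter (tr r1) (tr r2) :: ('a, 'v, 'l ctor) tty) (TCon RecC (TCon (LabC (fst p)) (snd p)))"
    proof
      fix p :: "'l \<times> ('a, 'v, 'l ctor) tty" assume "p \<in> set (flds r1 @ flds r2)"
      then consider "p \<in> set (flds r1)" | "p \<in> set (flds r2)" by auto
      then show "tsub (TInter (tr r1) (tr r2) :: ('a, 'v, 'l ctor) tty) (TCon RecC (TCon (LabC (fst p)) (snd p)))"
      proof cases
        case 1 then show ?thesis using i1 by (meson enc_mem t_inter1 t_trans)
      next
        case 2 then show ?thesis using i2 by (meson enc_mem t_inter2 t_trans)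
      qed
    qed
    show "tsub (TInter (tr r1) (tr r2) :: ('a, 'v, 'l ctor) tty) (TCon RecC TOmega)"
      using i1 by (meson enc_top t_inter1 t_trans)
  qed
  have c: "tsub (enc (flds r1 @ flds r2)) (TInter (tr r1) (tr r2) :: ('a, 'v, 'l ctor) tty)"
    using a i1 i2 by (meson t_glb t_trans)
  show ?case using b c by simp
qed (auto intro: tI)

lemma rec_case: "isrec a \<Longrightarrow> isrec b \<Longrightarrow> fw (flds a :: ('l \<times> ('a, 'v, 'l ctor) tty) list) (flds b) \<Longrightarrow> tsub (tr a :: ('a, 'v, 'l ctor) tty) (tr b)"
  by (meson fw_enc t_trans tr_enc)


lemma fw_nil: "fw xs []"
  by (simp add: fw_def)

lemma cap2: "tsub (cap [a, b]) (TInter a b)"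
  unfolding cap_def by (simp add: t_glb t_inter1 t_trans[OF t_inter2])

lemma pls_dom: "fst ` set (pls b c) = fst ` set b \<union> fst ` set c"
  by (auto simp: pls_def)

lemma pls_assoc: "pls (pls a b) c = pls a (pls b c)"
  unfolding pls_def[of a "pls b c"] pls_dom by (auto simp: pls_def)

lemma tr_sound: "ssub a b \<Longrightarrow> tsub (tr a :: ('a, 'v, 'l ctor) tty) (tr b) \<and>
    fw (flds a :: ('l \<times> ('a, 'v, 'l ctor) tty) list) (flds b)"
proof (induction rule: ssub.induct)
  case (s_refl s)
  then show ?case by (simp add: t_refl fw_subset)
next
  case (s_trans s t u)
  then show ?case by (meson fw_trans t_trans)
next
  case (s_omega s)
  then show ?case by (simp add: t_omega fw_nil)
next
  case s_omega_arr
  then show ?case by (simp add: t_omega_arr fw_nil)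
next
  case (s_inter1 s t)
  then show ?case by (simp add: t_inter1 fw_subset)
next
  case (s_inter2 s t)
  then show ?case by (simp add: t_inter2 fw_subset)
next
  case (s_glb s t1 t2)
  then show ?case by (simp add: t_glb fw_app)
next
  case (s_arr_dist s t1 t2)
  then show ?case by (simp add: t_arr_dist fw_nil)
next
  case (s_arr s2 s1 t1 t2)
  then show ?case by (simp add: t_arr fw_nil)
next
  case (s_field_empty s l)
  then show ?case by (simp add: t_con t_omega fw_nil)
next
  case (s_field_inter s t l)
  then show ?case by (simp add: rc_lc_dist fw_def lab_def cap2)
next
  case (s_field s t l)
  then show ?case by (simp add: t_con fw_def lab_def cap_def t_trans[OF t_inter1])
next
  case (s_plus_empty_r1 r)
  then show ?case by (intro conjI rec_case fw_subset) (auto simp: pls_def)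
next
  case (s_plus_empty_r2 r)
  then show ?case by (intro conjI rec_case fw_subset) (auto simp: pls_def)
next
  case (s_plus_empty_l1 r)
  then show ?case by (intro conjI rec_case fw_subset) (auto simp: pls_def)
next
  case (s_plus_empty_l2 r)
  then show ?case by (intro conjI rec_case fw_subset) (auto simp: pls_def)
next
  case (s_plus_assoc1 r1 r2 r3)
  then show ?case by (intro conjI rec_case fw_subset) (auto simp: pls_assoc)
next
  case (s_plus_assoc2 r1 r2 r3)
  then show ?case by (intro conjI rec_case fw_subset) (auto simp: pls_assoc)
next
  case (s_plus_dist1 r1 r2 r3)
  then show ?case by (intro conjI rec_case fw_subset) (auto simp: pls_def)
next
  case (s_plus_dist2 r1 r2 r3)
  then show ?case by (intro conjI rec_case fw_subset) (auto simp: pls_def)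
next
  case (s_plus_same1 s t r l)
  then show ?case by (intro conjI rec_case fw_subset) (auto simp: pls_def)
next
  case (s_plus_same2 s t r l)
  then show ?case by (intro conjI rec_case fw_subset) (auto simp: pls_def)
next
  case (s_plus_diff1 l l' s t r)
  then show ?case by (intro conjI rec_case fw_subset) (auto simp: pls_def)
next
  case (s_plus_diff2 l l' s t r)
  then show ?case by (intro conjI rec_case fw_subset) (auto simp: pls_def)
next
  case (s_plus_mono_l r1 r2 r)
  then show ?case by (intro conjI rec_case) (auto intro: fw_pls_mono)
next
  case (s_plus_cong_r r1 r2 r)
  then show ?case by (intro conjI rec_case) (auto intro: fw_pls_cong)
qed

lemma transl_tr: "transl L \<sigma> = Some s \<Longrightarrow> s = tr \<sigma>"
proof (induction \<sigma> arbitrary: s)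
  case (SArr s1 s2)
  then show ?case by (auto split: option.splits)
next
  case (SInter s1 s2)
  then show ?case by (auto split: option.splits)
next
  case (SField l s1)
  then show ?case by (auto split: if_splits)
qed auto

fun bk :: "('a, 'v, 'l ctor) tty \<Rightarrow> ('a, 'l) sty"
and bkr :: "('a, 'v, 'l ctor) tty \<Rightarrow> ('a, 'l) sty" where
  "bk (TAtom a) = SAtom a"
| "bk (TVar v) = SOmega"
| "bk TOmega = SOmega"
| "bk (TArr a b) = SArr (bk a) (bk b)"
| "bk (TInter a b) = SInter (bk a) (bk b)"
| "bk (TCon RecC x) = bkr x"
| "bk (TCon (LabC l) x) = SOmega"
| "bkr (TCon (LabC l) y) = SField l (bk y)"
| "bkr (TInter x y) = SInter (bkr x) (bkr y)"
| "bkr (TAtom a) = SEmpty"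
| "bkr (TVar v) = SEmpty"
| "bkr TOmega = SEmpty"
| "bkr (TArr a b) = SEmpty"
| "bkr (TCon RecC x) = SEmpty"

lemma bk_wf: "swf (bk x) \<and> isrec (bkr x)"
proof (induction x)
  case (TCon c x)
  then show ?case by (cases c) (auto simp: isrec_swf)
qed auto

lemma bkr_empty: "ssub (bkr x) SEmpty"
proof (induction x)
  case (TInter x1 x2)
  have "swf (bkr x1)" "swf (bkr x2)" using bk_wf isrec_swf by blast+
  then show ?case using TInter by (simp add: s_trans[OF s_inter1])
next
  case (TCon c x)
  then show ?case using bk_wf by (cases c) (auto intro: s_refl s_field_empty)
qed (auto intro: s_refl)

lemma bk_sound: "tsub x y \<Longrightarrow> ssub (bk x) (bk y) \<and> ssub (bkr x) (bkr y)"
proof (induction rule: tsub.induct)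
  case (t_refl s)
  then show ?case by (metis bk_wf isrec_swf s_refl)
next
  case (t_trans s t u)
  then show ?case by (meson s_trans)
next
  case (t_omega s)
  then show ?case by (metis bk.simps(3) bk_wf s_omega bkr_empty bkr.simps(5))
next
  case t_omega_arr
  then show ?case by (simp add: s_omega_arr s_refl)
next
  case (t_inter1 s t)
  have "swf (bk s)" "swf (bk t)" "swf (bkr s)" "swf (bkr t)" using bk_wf isrec_swf by blast+
  then show ?case by (simp add: s_inter1)
next
  case (t_inter2 s t)
  have "swf (bk s)" "swf (bk t)" "swf (bkr s)" "swf (bkr t)" using bk_wf isrec_swf by blast+
  then show ?case by (simp add: s_inter2)
next
  case (t_glb s t1 t2)
  then show ?case by (simp add: s_glb)
next
  case (t_arr_dist s t1 t2)
  have "swf (bk s)" "swf (bk t1)" "swf (bk t2)" using bk_wf isrec_swf by blast+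
  then show ?case by (simp add: s_arr_dist s_inter1)
next
  case (t_arr s2 s1 t1 t2)
  then show ?case by (simp add: s_arr s_refl)
next
  case (t_con t1 t2 c)
  then show ?case by (cases c) (auto simp: s_refl s_field)
next
  case (t_con_dist c t1 t2)
  have "swf (bk t1)" "swf (bk t2)" "swf (bkr t1)" "swf (bkr t2)" "swf (SInter (bkr t1) (bkr t2))"
    using bk_wf isrec_swf by auto
  then show ?case
    by (cases c) (auto simp: s_refl s_inter1 s_omega s_field_inter)
qed

lemma bk_transl: "transl L \<sigma> = Some s \<Longrightarrow> bk s = \<sigma>"
proof (induction \<sigma> arbitrary: s)
  case (SArr s1 s2)
  then show ?case by (auto split: option.splits)
next
  case (SInter s1 s2)
  then show ?case by (auto split: option.splits)
next
  case (SField l s1)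
  then show ?case by (auto split: if_splits)
qed auto

theorem lemma5p1:
  fixes L :: "'l set"
    and \<sigma> \<tau> :: "('a, 'l) sty"
    and s t :: "('a, 'v, 'l ctor) tty"
  assumes "finite L"
    and "swf \<sigma>" and "swf \<tau>"
    and "transl L \<sigma> = Some s"
    and "transl L \<tau> = Some t"
  shows "seq \<sigma> \<tau> \<longleftrightarrow> teq s t"
proof
  assume "seq \<sigma> \<tau>"
  then have "ssub \<sigma> \<tau>" "ssub \<tau> \<sigma>" by (auto simp: seq_def)
  then have "tsub (tr \<sigma> :: ('a, 'v, 'l ctor) tty) (tr \<tau>)" "tsub (tr \<tau> :: ('a, 'v, 'l ctor) tty) (tr \<sigma>)"
    using tr_sound by blast+
  then show "teq s t" using transl_tr[OF assms(4)] transl_tr[OF assms(5)] by (simp add: teq_def)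
next
  assume "teq s t"
  then have "tsub s t" "tsub t s" by (auto simp: teq_def)
  then have "ssub (bk s) (bk t)" "ssub (bk t) (bk s)" using bk_sound by blast+
  then show "seq \<sigma> \<tau>" using bk_transl[OF assms(4)] bk_transl[OF assms(5)] by (simp add: seq_def)
qed

end
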